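(* (1) Let $f,g$ be two packed words (of the same length). Then $f\leq g$ if, and only if, $\mathrm{Std}(f)=\mathrm{Std}(g)$ and $M(f)\subseteq M(g)$. (2) For all $n\geq1$, the map $$\Phi:(\{\text{packed words of length }n\},\leq)\longrightarrow\bigsqcup_{\sigma\in\mathfrak{S}_n}(\{\text{subsets of }M(\sigma)\},\subseteq),\qquad f\longmapsto M(f)\subseteq M(\mathrm{Std}(f)),$$ is an isomorphism of posets (the target being the disjoint union of the posets of subsets of $M(\sigma)$ ordered by inclusion, with elements in different components incomparable). Hence the poset of packed words of length $n$ is a disjoint union, indexed by $\sigma\in\mathfrak{S}_n$, of posets isomorphic to the Boolean lattices of subsets of $M(\sigma)$.
   Context: $[n]=\{1,\ldots,n\}$. A packed word of length $n$ is a word $f=f(1)\ldots f(n)$ of positive integers with $\{f(1),\ldots,f(n)\}=[\max f]$; permutations of $[n]$ are the packed words of length $n$ with distinct letters, $\mathfrak{S}_n$ their set. For packed words $f,g$ of length $n$, $g\leq f$ means: for all $i,j\in[n]$, $f(i)\leq f(j)\Rightarrow g(i)\leq g(j)$; $f(i)>f(j)$ and $i<j\Rightarrow g(i)>g(j)$; $f(i)=f(j)\Rightarrow g(i)=g(j)$. The standardization $\mathrm{Std}(f)$ of a packed word $f$ of length $n$ is the unique $\sigma\in\mathfrak{S}_n$ such that for all $i,j$: $f(i)<f(j)\Rightarrow\sigma(i)<\sigma(j)$, and ($f(i)=f(j)$ and $i<j$) $\Rightarrow\sigma(i)<\sigma(j)$. For a packed word $f$ of length $n$, $M(f)$ is the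 set of $i\in[n]$ such that: $f(i)<\max f$; for all $j\in[n]$, $f(j)=f(i)\Rightarrow j\leq i$; and for all $j\in[n]$, $f(j)=f(i)+1\Rightarrow j>i$. *)

theory Defs
  imports Main
begin

text \<open>Words are lists of naturals; letters are addressed 1-based: position i of f,
  for i in {1..length f}, is f ! (i - 1).\<close>

definition at :: "nat list \<Rightarrow> nat \<Rightarrow> nat" where
  "at f i = f ! (i - 1)"

definition maxw :: "nat list \<Rightarrow> nat" where
  "maxw f = Max (insert 0 (set f))"

definition packed :: "nat list \<Rightarrow> bool" where
  "packed f \<longleftrightarrow> set f = {1..maxw f}"

definition packed_words :: "nat \<Rightarrow> nat list set" where
  "packed_words n = {f. packed f \<and> length f = n}"

definition perms :: "nat \<Rightarrow> nat list set" where
  "perms n = {f. packed f \<and> length f = n \<and> distinct f}"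

text \<open>pw_le g f means g \<le> f.\<close>
definition pw_le :: "nat list \<Rightarrow> nat list \<Rightarrow> bool" where
  "pw_le g f \<longleftrightarrow> length g = length f \<and>
     (\<forall>i\<in>{1..length f}. \<forall>j\<in>{1..length f}.
        (at f i \<le> at f j \<longrightarrow> at g i \<le> at g j) \<and>
        (at f i > at f j \<and> i < j \<longrightarrow> at g i > at g j) \<and>
        (at f i = at f j \<longrightarrow> at g i = at g j))"

definition Std :: "nat list \<Rightarrow> nat list" where
  "Std f = (THE \<sigma>. \<sigma> \<in> perms (length f) \<and>
     (\<forall>i\<in>{1..length f}. \<forall>j\<in>{1..length f}.
        (at f i < at f j \<longrightarrow> at \<sigma> i < at \<sigma> j) \<and>
        (at f i = at f j \<and> i < j \<longrightarrow> at \<sigma> i < at \<sigma> j)))"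

definition M :: "nat list \<Rightarrow> nat set" where
  "M f = {i\<in>{1..length f}. at f i < maxw f \<and>
     (\<forall>j\<in>{1..length f}. at f j = at f i \<longrightarrow> j \<le> i) \<and>
     (\<forall>j\<in>{1..length f}. at f j = at f i + 1 \<longrightarrow> j > i)}"

text \<open>Target poset: disjoint union over \<sigma> of subsets of M \<sigma>, as pairs (\<sigma>, S);
  (\<sigma>,S) \<le> (\<tau>,T) iff \<sigma> = \<tau> and S \<subseteq> T.\<close>
definition boolean_union :: "nat \<Rightarrow> (nat list \<times> nat set) set" where
  "boolean_union n = {(\<sigma>, S). \<sigma> \<in> perms n \<and> S \<subseteq> M \<sigma>}"

definition bu_le :: "nat list \<times> nat set \<Rightarrow> nat list \<times> nat set \<Rightarrow> bool" where
  "bu_le x y \<longleftrightarrow> fst x = fst y \<and> snd x \<subseteq> snd y"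

definition Phi :: "nat list \<Rightarrow> nat list \<times> nat set" where
  "Phi f = (Std f, M f)"

end

theory Submission
  imports Defs
begin


lemma at_Suc: "at f (Suc k) = f ! k" by (simp add: at_def)

lemma at_image: "at f ` {1..length f} = set f"
proof
  show "at f ` {1..length f} \<subseteq> set f"
    by (auto simp: at_def)
  show "set f \<subseteq> at f ` {1..length f}"
  proof
    fix v assume "v \<in> set f"
    then obtain k where k: "k < length f" "f ! k = v" by (auto simp: in_set_conv_nth)
    then have "at f (Suc k) = v" "Suc k \<in> {1..length f}" by (auto simp: at_Suc)
    then show "v \<in> at f ` {1..length f}" by force
  qed
qed

lemma maxw_interval: "maxw (xs) = n" if "set xs = {1..n}" for xs n
proof -
  have "insert 0 {1..n} = {0..n}" by auto
  moreover have "Max {0..n} = n" by (rule Max_eqI) auto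
  ultimately show ?thesis using that by (simp add: maxw_def)
qed

lemma packed_val: "packed f \<Longrightarrow> j \<in> {1..length f} \<Longrightarrow> at f j \<in> {1..maxw f}"
  using at_image unfolding packed_def by blast

lemma packed_ex: "packed f \<Longrightarrow> v \<in> {1..maxw f} \<Longrightarrow> \<exists>j\<in>{1..length f}. at f j = v"
  using at_image unfolding packed_def by (metis imageE)

lemma perm_set: assumes "\<sigma> \<in> perms n" shows "set \<sigma> = {1..n}"
proof -
  from assms have p: "set \<sigma> = {1..maxw \<sigma>}" "length \<sigma> = n" "distinct \<sigma>"
    by (auto simp: perms_def packed_def)
  from p(2,3) have "card (set \<sigma>) = n" by (simp add: distinct_card)
  moreover have "card (set \<sigma>) = maxw \<sigma>" using p(1) by simp
  ultimately have "maxw \<sigma> = n" by simp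
  then show ?thesis using p(1) by simp
qed

lemma perm_inj: assumes "\<sigma> \<in> perms n" shows "inj_on (at \<sigma>) {1..n}"
proof
  fix x y assume xy: "x \<in> {1..n}" "y \<in> {1..n}" "at \<sigma> x = at \<sigma> y"
  from assms have "length \<sigma> = n" "distinct \<sigma>" by (auto simp: perms_def)
  with xy show "x = y" by (auto simp: at_def nth_eq_iff_index_eq)
qed

lemma perm_val: assumes "\<sigma> \<in> perms n" "i \<in> {1..n}" shows "at \<sigma> i \<in> {1..n}"
  using at_image[of \<sigma>] perm_set[OF assms(1)] assms by (auto simp: perms_def)

lemma perm_rank: assumes "\<sigma> \<in> perms n" "i \<in> {1..n}"
  shows "card {j\<in>{1..n}. at \<sigma> j \<le> at \<sigma> i} = at \<sigma> i"
proof -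
  let ?A = "{j\<in>{1..n}. at \<sigma> j \<le> at \<sigma> i}"
  have len: "length \<sigma> = n" using assms by (auto simp: perms_def)
  have "at \<sigma> ` ?A = {1..at \<sigma> i}"
  proof
    show "at \<sigma> ` ?A \<subseteq> {1..at \<sigma> i}" using perm_val[OF assms(1)] by auto
    show "{1..at \<sigma> i} \<subseteq> at \<sigma> ` ?A"
    proof
      fix v assume v: "v \<in> {1..at \<sigma> i}"
      then have "v \<in> {1..n}" using perm_val[OF assms] by auto
      then have "v \<in> at \<sigma> ` {1..n}" using at_image[of \<sigma>] perm_set[OF assms(1)] len by simp
      then obtain j where "j \<in> {1..n}" "at \<sigma> j = v" by auto
      then show "v \<in> at \<sigma> ` ?A" using v by force
    qed
  qed
  moreover have "inj_on (at \<sigma>) ?A" using perm_inj[OF assms(1)] by (rule inj_on_subset) auto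
  ultimately show ?thesis by (metis card_atLeastAtMost card_image diff_Suc_1)
qed

definition L :: "nat list \<Rightarrow> nat \<Rightarrow> nat \<Rightarrow> bool" where
  "L f x y \<longleftrightarrow> at f x < at f y \<or> (at f x = at f y \<and> x < y)"

lemma L_trans: "L f x y \<Longrightarrow> L f y z \<Longrightarrow> L f x z" by (auto simp: L_def)
lemma L_irrefl: "\<not> L f x x" by (auto simp: L_def)
lemma L_asym: "L f x y \<Longrightarrow> \<not> L f y x" by (auto simp: L_def)
lemma L_total: "x \<noteq> y \<Longrightarrow> L f x y \<or> L f y x" by (auto simp: L_def)

definition stdprop :: "nat list \<Rightarrow> nat list \<Rightarrow> bool" where
  "stdprop f \<sigma> \<longleftrightarrow> \<sigma> \<in> perms (length f) \<and>
     (\<forall>i\<in>{1..length f}. \<forall>j\<in>{1..length f}.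
        (at f i < at f j \<longrightarrow> at \<sigma> i < at \<sigma> j) \<and>
        (at f i = at f j \<and> i < j \<longrightarrow> at \<sigma> i < at \<sigma> j))"

lemma stdprop_iff: "stdprop f \<sigma> \<longleftrightarrow> \<sigma> \<in> perms (length f) \<and>
   (\<forall>i\<in>{1..length f}. \<forall>j\<in>{1..length f}. L f i j \<longrightarrow> at \<sigma> i < at \<sigma> j)"
  unfolding stdprop_def L_def by blast

lemma stdprop_val: assumes "stdprop f \<sigma>" "i \<in> {1..length f}"
  shows "at \<sigma> i = card {j\<in>{1..length f}. L f j i \<or> j = i}"
proof -
  let ?n = "length f"
  have p: "\<sigma> \<in> perms ?n" and m: "\<And>i j. i\<in>{1..?n} \<Longrightarrow> j\<in>{1..?n} \<Longrightarrow> L f i j \<Longrightarrow> at \<sigma> i < at \<sigma> j"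
    using assms(1) by (auto simp: stdprop_iff)
  have "{j\<in>{1..?n}. at \<sigma> j \<le> at \<sigma> i} = {j\<in>{1..?n}. L f j i \<or> j = i}"
  proof (intro Collect_cong conj_cong refl iffI)
    fix j assume j: "j \<in> {1..?n}" "at \<sigma> j \<le> at \<sigma> i"
    show "L f j i \<or> j = i"
    proof (rule ccontr)
      assume "\<not> (L f j i \<or> j = i)"
      then have "L f i j" using L_total by blast
      then show False using m[OF assms(2) j(1)] j(2) by simp
    qed
  next
    fix j assume j: "j \<in> {1..?n}" "L f j i \<or> j = i"
    then show "at \<sigma> j \<le> at \<sigma> i" using m[OF j(1) assms(2)] by force
  qed
  then show ?thesis using perm_rank[OF p assms(2)] by simp
qed

lemma stdprop_unique: assumes "stdprop f \<sigma>" "stdprop f \<tau>" shows "\<sigma> = \<tau>"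
proof (rule nth_equalityI)
  show "length \<sigma> = length \<tau>" using assms by (simp add: stdprop_def perms_def)
  fix k assume "k < length \<sigma>"
  then have "Suc k \<in> {1..length f}" using assms by (simp add: stdprop_def perms_def)
  then show "\<sigma> ! k = \<tau> ! k" using stdprop_val[OF assms(1)] stdprop_val[OF assms(2)]
    by (metis at_Suc)
qed

lemma stdprop_ex: "\<exists>\<sigma>. stdprop f \<sigma>"
proof -
  let ?n = "length f"
  define r where "r i = card {j\<in>{1..?n}. L f j i \<or> j = i}" for i
  define \<sigma> where "\<sigma> = map r [1..<?n+1]"
  have at\<sigma>: "at \<sigma> i = r i" if "i \<in> {1..?n}" for i
    using that by (cases i) (auto simp: \<sigma>_def at_Suc nth_map simp del: upt_Suc)
  have fin: "finite {j\<in>{1..?n}. L f j i \<or> j = i}" for i by simp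
  have mono: "r x < r y" if "L f x y" "y \<in> {1..?n}" for x y
  proof -
    have "{j\<in>{1..?n}. L f j x \<or> j = x} \<subset> {j\<in>{1..?n}. L f j y \<or> j = y}"
    proof
      show "{j\<in>{1..?n}. L f j x \<or> j = x} \<subseteq> {j\<in>{1..?n}. L f j y \<or> j = y}"
        using that L_trans by blast
      have "y \<notin> {j\<in>{1..?n}. L f j x \<or> j = x}" using that L_asym L_irrefl by blast
      then show "{j\<in>{1..?n}. L f j x \<or> j = x} \<noteq> {j\<in>{1..?n}. L f j y \<or> j = y}"
        using that by blast
    qed
    then show ?thesis unfolding r_def by (simp add: psubset_card_mono)
  qed
  have inj: "inj_on r {1..?n}"
  proof
    fix x y assume "x \<in> {1..?n}" "y \<in> {1..?n}" "r x = r y"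
    then show "x = y" using mono L_total by (metis less_irrefl)
  qed
  have rng: "r i \<in> {1..?n}" if "i \<in> {1..?n}" for i
  proof -
    have "i \<in> {j\<in>{1..?n}. L f j i \<or> j = i}" using that by simp
    then have "r i \<ge> 1" unfolding r_def by (metis (no_types, lifting) card_0_eq empty_iff fin less_one not_le)
    moreover have "r i \<le> ?n" unfolding r_def by (metis (no_types, lifting) card_atLeastAtMost card_mono diff_Suc_1 finite_atLeastAtMost mem_Collect_eq subsetI)
    ultimately show ?thesis by simp
  qed
  have set\<sigma>: "set \<sigma> = r ` {1..?n}" unfolding \<sigma>_def by auto
  have len: "length \<sigma> = ?n" unfolding \<sigma>_def by (simp del: upt_Suc)
  have dist: "distinct \<sigma>" unfolding \<sigma>_def using inj by (simp add: distinct_map atLeastLessThanSuc_atLeastAtMost del: upt_Suc)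
  have "set \<sigma> = {1..?n}"
  proof (rule card_subset_eq)
    show "set \<sigma> \<subseteq> {1..?n}" using set\<sigma> rng by auto
    have "card (set \<sigma>) = ?n" using dist len distinct_card by metis
    then show "card (set \<sigma>) = card {1..?n}" by simp
  qed simp
  then have "packed \<sigma>" unfolding packed_def using maxw_interval[of \<sigma> ?n] by simp
  then have "\<sigma> \<in> perms ?n" using len dist by (simp add: perms_def)
  moreover have "\<forall>i\<in>{1..?n}. \<forall>j\<in>{1..?n}. L f i j \<longrightarrow> at \<sigma> i < at \<sigma> j"
    using mono at\<sigma> by simp
  ultimately show ?thesis unfolding stdprop_iff by blast
qed

lemma Std_prop: "stdprop f (Std f)"
proof -
  have "Std f = (THE \<sigma>. stdprop f \<sigma>)" unfolding Std_def stdprop_def ..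
  then show ?thesis using stdprop_ex stdprop_unique by (metis theI)
qed

lemma Std_eq: "stdprop f \<sigma> \<Longrightarrow> Std f = \<sigma>"
  using Std_prop stdprop_unique by blast

lemma Std_perm: "Std f \<in> perms (length f)" using Std_prop stdprop_def by blast

lemma Std_L: assumes "x \<in> {1..length f}" "y \<in> {1..length f}"
  shows "L f x y \<longleftrightarrow> at (Std f) x < at (Std f) y"
proof
  show "L f x y \<Longrightarrow> at (Std f) x < at (Std f) y" using Std_prop[of f] assms unfolding stdprop_iff by blast
next
  assume a: "at (Std f) x < at (Std f) y"
  show "L f x y"
  proof (rule ccontr)
    assume "\<not> L f x y"
    moreover have "x \<noteq> y" using a by auto
    ultimately have "L f y x" using L_total by blast
    then have "at (Std f) y < at (Std f) x" using Std_prop[of f] assms unfolding stdprop_iff by blast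
    then show False using a by simp
  qed
qed

lemma Std_eqI: assumes "length f = length g"
  "\<And>x y. x \<in> {1..length f} \<Longrightarrow> y \<in> {1..length f} \<Longrightarrow> L g x y \<Longrightarrow> L f x y"
  shows "Std f = Std g"
proof -
  have "stdprop g (Std f)"
    unfolding stdprop_iff
  proof (intro conjI ballI impI)
    show "Std f \<in> perms (length g)" using Std_perm[of f] assms(1) by simp
    fix x y assume xy: "x \<in> {1..length g}" "y \<in> {1..length g}" "L g x y"
    then have "L f x y" using assms by simp
    then show "at (Std f) x < at (Std f) y" using Std_L xy assms(1) by simp
  qed
  then show ?thesis using Std_eq by simp
qed

lemma Std_eqD: assumes "Std f = Std g" "length f = length g" "x \<in> {1..length f}" "y \<in> {1..length f}"
  shows "L f x y \<longleftrightarrow> L g x y"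
  using Std_L[of x f y] Std_L[of x g y] assms by simp




lemma pw_leD: assumes "pw_le g f" "i \<in> {1..length f}" "j \<in> {1..length f}"
  shows "at f i \<le> at f j \<Longrightarrow> at g i \<le> at g j"
    "at f i > at f j \<Longrightarrow> i < j \<Longrightarrow> at g i > at g j"
    "at f i = at f j \<Longrightarrow> at g i = at g j"
  using assms unfolding pw_le_def by blast+

lemma M_iff: "i \<in> M f \<longleftrightarrow> i \<in> {1..length f} \<and> at f i < maxw f \<and>
     (\<forall>j\<in>{1..length f}. at f j = at f i \<longrightarrow> j \<le> i) \<and>
     (\<forall>j\<in>{1..length f}. at f j = at f i + 1 \<longrightarrow> j > i)"
  unfolding M_def by blast

lemma partA_fwd:
  assumes pf: "packed f" and pg: "packed g" and len: "length f = length g" and le: "pw_le f g"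
  shows "Std f = Std g \<and> M f \<subseteq> M g"
proof
  let ?n = "length g"
  note c = pw_leD[OF le]
  show "Std f = Std g"
  proof (rule Std_eqI[OF len])
    fix x y assume xy: "x \<in> {1..length f}" "y \<in> {1..length f}" "L g x y"
    show "L f x y"
    proof (cases "at g x = at g y")
      case True
      then show ?thesis using c(3)[of x y] xy len by (auto simp: L_def)
    next
      case False
      then have gxy: "at g x < at g y" using xy(3) by (auto simp: L_def)
      then have "at f x \<le> at f y" using c(1)[of x y] xy len by simp
      moreover have "\<not> (at f x = at f y \<and> y < x)" using c(2)[of y x] xy len gxy by auto
      moreover have "x \<noteq> y" using xy(3) L_irrefl by metis
      ultimately show ?thesis unfolding L_def by auto
    qed
  qed
  show "M f \<subseteq> M g"
  proof
    fix i assume "i \<in> M f"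
    then have i: "i \<in> {1..?n}" "at f i < maxw f"
      and last: "\<And>j. j\<in>{1..?n} \<Longrightarrow> at f j = at f i \<Longrightarrow> j \<le> i"
      and nxt: "\<And>j. j\<in>{1..?n} \<Longrightarrow> at f j = at f i + 1 \<Longrightarrow> j > i"
      unfolding M_iff using len by auto
    have up: "at g x < at g y" if "x \<in> {1..?n}" "y \<in> {1..?n}" "at f x < at f y" for x y
      using c(1)[of y x] that by force
    have "at f i + 1 \<in> {1..maxw f}" using i by simp
    then have "\<exists>k\<in>{1..length f}. at f k = at f i + 1" using packed_ex[OF pf] by blast
    then obtain k where k: "k \<in> {1..?n}" "at f k = at f i + 1" using len by auto
    have "at g i < at g k" using up[OF i(1) k(1)] k by simp
    moreover have "at g k \<le> maxw g" using packed_val[OF pg k(1)] by simp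
    ultimately have g1: "at g i < maxw g" by simp
    have g2: "\<forall>j\<in>{1..?n}. at g j = at g i \<longrightarrow> j \<le> i"
    proof (intro ballI impI)
      fix j assume j: "j \<in> {1..?n}" "at g j = at g i"
      then have "at f j = at f i" using c(3)[of j i] i by simp
      then show "j \<le> i" using last j by simp
    qed
    have g3: "\<forall>j\<in>{1..?n}. at g j = at g i + 1 \<longrightarrow> j > i"
    proof (intro ballI impI)
      fix j assume j: "j \<in> {1..?n}" "at g j = at g i + 1"
      show "j > i"
      proof (rule ccontr)
        assume "\<not> i < j"
        moreover have "j \<noteq> i" using j by auto
        ultimately have ji: "j < i" by simp
        then have fji: "at f j > at f i" using c(2)[of j i] j i by simp
        show False
        proof (cases "at f j = at f i + 1")
          case True
          then show False using nxt[OF j(1)] ji by simp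
        next
          case False
          then have "at f k < at f j" using fji k by simp
          then have "at g k < at g j" using up[OF k(1) j(1)] by simp
          moreover have "at g i < at g k" using up[OF i(1) k(1)] k by simp
          ultimately show False using j by simp
        qed
      qed
    qed
    show "i \<in> M g" unfolding M_iff using i g1 g2 g3 by blast
  qed
qed

lemma sandwich: assumes "L g x k" "L g k y" "at g x = at g y"
  shows "at g k = at g x \<and> x < k \<and> k < y"
  using assms unfolding L_def by auto

lemma partA_bwd:
  assumes pf: "packed f" and pg: "packed g" and len: "length f = length g"
    and st: "Std f = Std g" and sub: "M f \<subseteq> M g"
  shows "pw_le f g"
proof -
  let ?n = "length g"
  have LL: "L f x y \<longleftrightarrow> L g x y" if "x \<in> {1..?n}" "y \<in> {1..?n}" for x y
    using Std_eqD[OF st len] that len by simp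
  have c1: "at f i \<le> at f j" if ij: "i \<in> {1..?n}" "j \<in> {1..?n}" "at g i \<le> at g j" for i j
  proof (rule ccontr)
    assume "\<not> at f i \<le> at f j"
    then have fji: "at f j < at f i" by simp
    then have "L f j i" by (simp add: L_def)
    then have "L g j i" using LL ij by simp
    then have gij: "at g i = at g j" and ji: "j < i" using ij(3) by (auto simp: L_def)
    define w where "w = at f i - 1"
    have fj1: "at f j \<ge> 1" using packed_val[OF pf] ij len by auto
    have w: "at f j \<le> w" "w < at f i" using fji unfolding w_def by auto
    let ?S = "{k\<in>{1..?n}. at f k = w}"
    have "w \<in> {1..maxw f}" using w fj1 packed_val[OF pf, of i] ij len by auto
    then obtain k0 where "k0 \<in> {1..length f}" "at f k0 = w" using packed_ex[OF pf, of w] by blast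
    then have "?S \<noteq> {}" using len by auto
    moreover have "finite ?S" by simp
    ultimately have aS: "Max ?S \<in> ?S" by (meson Max_in)
    define a where "a = Max ?S"
    have aS': "a \<in> ?S" unfolding a_def by (rule aS)
    then have a: "a \<in> {1..?n}" "at f a = w" by simp_all
    have amax: "k \<le> a" if "k \<in> {1..?n}" "at f k = w" for k
    proof -
      have "k \<in> ?S" using that by simp
      then have "k \<le> Max ?S" by (simp add: Max_ge)
      then show ?thesis unfolding a_def .
    qed
    have ja: "L f j a \<or> j = a"
    proof (cases "at f j = w")
      case True
      then have "j \<le> a" using amax ij(2) by simp
      then show ?thesis using True a(2) unfolding L_def by auto
    next
      case False
      then have "at f j < at f a" using w a(2) by simp
      then show ?thesis unfolding L_def by simp
    qed
    have ai: "L f a i" using a w by (simp add: L_def)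
    have gja: "L g j a \<or> j = a" using ja LL a ij by auto
    have gai: "L g a i" using ai LL a ij by auto
    have ga: "at g a = at g i" and ailt: "a < i"
    proof -
      have "at g a = at g i \<and> a < i"
      proof (cases "j = a")
        case True then show ?thesis using gai gij by (auto simp: L_def)
      next
        case False
        then have "L g j a" using gja by simp
        then show ?thesis using sandwich[OF _ gai, of j] gij by auto
      qed
      then show "at g a = at g i" "a < i" by auto
    qed
    have "a \<in> M f"
      unfolding M_iff
    proof (intro conjI ballI impI)
      show "a \<in> {1..length f}" using a len by simp
      show "at f a < maxw f" using a w packed_val[OF pf, of i] ij len by auto
      fix k assume k: "k \<in> {1..length f}"
      { assume "at f k = at f a" then show "k \<le> a" using amax k a len by simp }
      { assume fk: "at f k = at f a + 1"
        show "a < k"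
        proof (cases "i \<le> k")
          case True then show ?thesis using ailt by simp
        next
          case False
          then have "L f k i" using fk a w by (simp add: L_def w_def)
          then have h1: "L g k i" using LL k ij len by simp
          have "L f a k" using fk by (simp add: L_def)
          then have h2: "L g a k" using LL k a len by simp
          have "at g a = at g i" by (fact ga)
          then show ?thesis using sandwich[OF h2 h1] by blast
        qed }
    qed
    then have "a \<in> M g" using sub by auto
    then have "\<forall>k\<in>{1..length g}. at g k = at g a \<longrightarrow> k \<le> a" unfolding M_iff by blast
    then have "i \<le> a" using ga ij by simp
    then show False using ailt by simp
  qed
  show ?thesis
    unfolding pw_le_def
  proof (intro conjI ballI impI)
    show "length f = length g" by fact
    fix i j assume ij: "i \<in> {1..?n}" "j \<in> {1..?n}"
    { assume "at g i \<le> at g j" then show "at f i \<le> at f j" using c1[OF ij] by blast }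
    { assume "at g j < at g i \<and> i < j"
      then have "L g j i" by (simp add: L_def)
      then have "L f j i" using LL ij by simp
      then show "at f j < at f i" using \<open>at g j < at g i \<and> i < j\<close> by (auto simp: L_def) }
    { assume "at g i = at g j" then have "at f i \<le> at f j" "at f j \<le> at f i" using c1[OF ij] c1[of j i] ij by auto
      then show "at f i = at f j" by simp }
  qed
qed




lemma partA: assumes "packed f" "packed g" "length f = length g"
  shows "pw_le f g \<longleftrightarrow> Std f = Std g \<and> M f \<subseteq> M g"
  using partA_fwd[OF assms] partA_bwd[OF assms] by blast

lemma perm_Std: assumes "\<sigma> \<in> perms n" shows "Std \<sigma> = \<sigma>"
proof (rule Std_eq)
  have len: "length \<sigma> = n" using assms by (simp add: perms_def)
  show "stdprop \<sigma> \<sigma>"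
    unfolding stdprop_iff
  proof (intro conjI ballI impI)
    show "\<sigma> \<in> perms (length \<sigma>)" using assms len by simp
    fix i j assume ij: "i \<in> {1..length \<sigma>}" "j \<in> {1..length \<sigma>}" "L \<sigma> i j"
    then have "i \<noteq> j" using L_irrefl by metis
    then have "at \<sigma> i \<noteq> at \<sigma> j" using perm_inj[OF assms] ij len unfolding inj_on_def by blast
    then show "at \<sigma> i < at \<sigma> j" using ij(3) by (auto simp: L_def)
  qed
qed

lemma pw_le_Std: "pw_le f (Std f)"
  unfolding pw_le_def
proof (intro conjI ballI impI)
  have p: "Std f \<in> perms (length f)" by (rule Std_perm)
  then show len: "length f = length (Std f)" by (simp add: perms_def)
  have inj: "inj_on (at (Std f)) {1..length f}" using perm_inj[OF p] .
  fix i j assume ij: "i \<in> {1..length (Std f)}" "j \<in> {1..length (Std f)}"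
  then have ij': "i \<in> {1..length f}" "j \<in> {1..length f}" using len by auto
  { assume "at (Std f) i \<le> at (Std f) j"
    then show "at f i \<le> at f j"
    proof (cases "i = j")
      case False
      then have "at (Std f) i \<noteq> at (Std f) j" using inj ij' unfolding inj_on_def by blast
      then have "at (Std f) i < at (Std f) j" using \<open>at (Std f) i \<le> at (Std f) j\<close> by simp
      then have "L f i j" using Std_L[OF ij'] by simp
      then show ?thesis by (auto simp: L_def)
    qed simp }
  { assume h: "at (Std f) j < at (Std f) i \<and> i < j"
    then have "L f j i" using Std_L[OF ij'(2,1)] by simp
    then show "at f j < at f i" using h by (auto simp: L_def) }
  { assume "at (Std f) i = at (Std f) j"
    then have "i = j" using inj ij' unfolding inj_on_def by blast
    then show "at f i = at f j" by simp }
qed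

lemma card_img_le:
  fixes p q :: "nat \<Rightarrow> nat"
  assumes "finite T" "\<forall>j\<in>T. \<forall>k\<in>T. q j = q k \<longrightarrow> p j = p k"
  shows "card (p ` T) \<le> card (q ` T)"
proof -
  define h where "h v = p (SOME j. j \<in> T \<and> q j = v)" for v
  have hq: "h (q j) = p j" if "j \<in> T" for j
  proof -
    have "\<exists>k. k \<in> T \<and> q k = q j" using that by blast
    then have "(SOME k. k \<in> T \<and> q k = q j) \<in> T \<and> q (SOME k. k \<in> T \<and> q k = q j) = q j"
      by (rule someI_ex)
    then show ?thesis unfolding h_def using assms(2) that by blast
  qed
  have "p ` T = h ` (q ` T)"
  proof
    show "p ` T \<subseteq> h ` q ` T"
    proof
      fix x assume "x \<in> p ` T"
      then obtain j where j: "j \<in> T" "x = p j" by blast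
      then have "x = h (q j)" using hq by simp
      then show "x \<in> h ` q ` T" using j(1) by blast
    qed
    show "h ` q ` T \<subseteq> p ` T" using hq by auto
  qed
  then show ?thesis by (simp add: card_image_le assms(1))
qed

lemma packed_card: assumes "packed f" "i \<in> {1..length f}"
  shows "at f i = card (at f ` {j\<in>{1..length f}. at f j \<le> at f i})"
proof -
  have "at f ` {j\<in>{1..length f}. at f j \<le> at f i} = {v \<in> set f. v \<le> at f i}"
  proof
    show "at f ` {j\<in>{1..length f}. at f j \<le> at f i} \<subseteq> {v \<in> set f. v \<le> at f i}"
      using at_image[of f] by auto
    show "{v \<in> set f. v \<le> at f i} \<subseteq> at f ` {j\<in>{1..length f}. at f j \<le> at f i}"
    proof
      fix x assume x: "x \<in> {v \<in> set f. v \<le> at f i}"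
      then have "x \<in> at f ` {1..length f}" using at_image[of f] by simp
      then obtain j where "j \<in> {1..length f}" "x = at f j" by blast
      then show "x \<in> at f ` {j\<in>{1..length f}. at f j \<le> at f i}" using x by blast
    qed
  qed
  also have "\<dots> = {1..at f i}" using assms packed_val[OF assms] unfolding packed_def by auto
  finally show ?thesis by simp
qed

lemma pw_antisym: assumes pf: "packed f" and pg: "packed g" and len: "length f = length g"
  and le1: "pw_le f g" and le2: "pw_le g f"
  shows "f = g"
proof (rule nth_equalityI)
  show "length f = length g" by fact
  fix k assume k: "k < length f"
  let ?n = "length f"
  let ?i = "Suc k"
  have i: "?i \<in> {1..?n}" using k by simp
  have iff: "at f x \<le> at f y \<longleftrightarrow> at g x \<le> at g y" if "x \<in> {1..?n}" "y \<in> {1..?n}" for x y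
  proof
    assume "at f x \<le> at f y" then show "at g x \<le> at g y" using pw_leD(1)[OF le2, of x y] that by blast
  next
    assume "at g x \<le> at g y" then show "at f x \<le> at f y" using pw_leD(1)[OF le1, of x y] that len by simp
  qed
  define T where "T = {j\<in>{1..?n}. at f j \<le> at f ?i}"
  have T: "T = {j\<in>{1..?n}. at g j \<le> at g ?i}"
    unfolding T_def
  proof (rule Collect_cong)
    fix j show "(j \<in> {1..?n} \<and> at f j \<le> at f ?i) = (j \<in> {1..?n} \<and> at g j \<le> at g ?i)"
      using iff[of j ?i] i by blast
  qed
  have eqv: "\<forall>j\<in>T. \<forall>l\<in>T. at g j = at g l \<longrightarrow> at f j = at f l"
  proof (intro ballI impI)
    fix j l assume jl: "j \<in> T" "l \<in> T" "at g j = at g l"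
    then have jl': "j \<in> {1..?n}" "l \<in> {1..?n}" unfolding T_def by auto
    have "at f j \<le> at f l" using iff[OF jl'] jl(3) by simp
    moreover have "at f l \<le> at f j" using iff[OF jl'(2,1)] jl(3) by simp
    ultimately show "at f j = at f l" by simp
  qed
  have eqv2: "\<forall>j\<in>T. \<forall>l\<in>T. at f j = at f l \<longrightarrow> at g j = at g l"
  proof (intro ballI impI)
    fix j l assume jl: "j \<in> T" "l \<in> T" "at f j = at f l"
    then have jl': "j \<in> {1..?n}" "l \<in> {1..?n}" unfolding T_def by auto
    have "at g j \<le> at g l" using iff[OF jl'] jl(3) by simp
    moreover have "at g l \<le> at g j" using iff[OF jl'(2,1)] jl(3) by simp
    ultimately show "at g j = at g l" by simp
  qed
  have finT: "finite T" unfolding T_def by simp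
  have "at f ?i = card (at f ` T)" unfolding T_def by (rule packed_card[OF pf i])
  also have "\<dots> = card (at g ` T)"
    using card_img_le[OF finT eqv] card_img_le[OF finT eqv2] by (rule antisym)
  also have "\<dots> = at g ?i" unfolding T using packed_card[OF pg, of ?i] i len by simp
  finally show "f ! k = g ! k" by (simp add: at_Suc)
qed




lemma merge:
  assumes pf: "packed f" and aM: "a \<in> M f"
  shows "packed (map (\<lambda>x. if at f a < x then x - 1 else x) f) \<and>
         length (map (\<lambda>x. if at f a < x then x - 1 else x) f) = length f \<and>
         Std (map (\<lambda>x. if at f a < x then x - 1 else x) f) = Std f \<and>
         M (map (\<lambda>x. if at f a < x then x - 1 else x) f) = M f - {a}"
proof -
  define v where "v = at f a"
  define \<phi> where "\<phi> x = (if v < x then x - 1 else x)" for x :: nat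
  define f' where "f' = map \<phi> f"
  have f'eq: "map (\<lambda>x. if at f a < x then x - 1 else x) f = f'"
    unfolding f'_def \<phi>_def v_def ..
  let ?n = "length f"
  define m where "m = maxw f"
  have a: "a \<in> {1..?n}" "v < m" and last: "\<And>j. j \<in> {1..?n} \<Longrightarrow> at f j = v \<Longrightarrow> j \<le> a"
    and nxt: "\<And>j. j \<in> {1..?n} \<Longrightarrow> at f j = v + 1 \<Longrightarrow> a < j"
    using aM unfolding M_iff v_def m_def by auto
  have v1: "1 \<le> v" using packed_val[OF pf a(1)] v_def by simp
  have len: "length f' = ?n" unfolding f'_def by simp
  have atf': "at f' j = \<phi> (at f j)" if "j \<in> {1..?n}" for j
    using that unfolding f'_def at_def by (subst nth_map) auto
  have phimono: "x \<le> y \<Longrightarrow> \<phi> x \<le> \<phi> y" for x y unfolding \<phi>_def by auto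
  have phieq: "\<phi> x = \<phi> y \<Longrightarrow> x < y \<Longrightarrow> x = v \<and> y = v + 1" for x y unfolding \<phi>_def by (auto split: if_splits)
  have setf: "set f = {1..m}" using pf unfolding packed_def m_def .
  have "set f' = \<phi> ` {1..m}" unfolding f'_def using setf by simp
  also have "\<dots> = {1..m - 1}"
  proof
    show "\<phi> ` {1..m} \<subseteq> {1..m - 1}" using a(2) v1 unfolding \<phi>_def by auto
    show "{1..m - 1} \<subseteq> \<phi> ` {1..m}"
    proof
      fix y assume y: "y \<in> {1..m - 1}"
      show "y \<in> \<phi> ` {1..m}"
      proof (cases "v < y")
        case True
        then have "\<phi> (y + 1) = y" "y + 1 \<in> {1..m}" using y unfolding \<phi>_def by auto
        then show ?thesis by (metis image_eqI)
      next
        case False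
        then have "\<phi> y = y" "y \<in> {1..m}" using y unfolding \<phi>_def by auto
        then show ?thesis by (metis image_eqI)
      qed
    qed
  qed
  finally have setf': "set f' = {1..m - 1}" .
  then have mf': "maxw f' = m - 1" by (rule maxw_interval)
  have pf': "packed f'" unfolding packed_def using setf' mf' by simp
  have std: "Std f' = Std f"
  proof (rule Std_eqI)
    show "length f' = length f" by (fact len)
    fix x y assume xy: "x \<in> {1..length f'}" "y \<in> {1..length f'}" "L f x y"
    then have xy': "x \<in> {1..?n}" "y \<in> {1..?n}" using len by auto
    show "L f' x y"
    proof (cases "at f x < at f y")
      case True
      then have le: "\<phi> (at f x) \<le> \<phi> (at f y)" using phimono by simp
      show ?thesis
      proof (cases "\<phi> (at f x) = \<phi> (at f y)")
        case True
        then have "at f x = v" "at f y = v + 1" using phieq \<open>at f x < at f y\<close> by blast+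
        then have "x < y" using last[OF xy'(1)] nxt[OF xy'(2)] by simp
        then show ?thesis using True atf' xy' by (simp add: L_def)
      next
        case False
        then show ?thesis using le atf' xy' by (simp add: L_def)
      qed
    next
      case False
      then have "at f x = at f y" "x < y" using xy(3) by (auto simp: L_def)
      then show ?thesis using atf' xy' by (simp add: L_def)
    qed
  qed
  have Mf: "i \<in> M f \<longleftrightarrow> i \<in> {1..?n} \<and> at f i < m \<and>
     (\<forall>j\<in>{1..?n}. at f j = at f i \<longrightarrow> j \<le> i) \<and>
     (\<forall>j\<in>{1..?n}. at f j = at f i + 1 \<longrightarrow> i < j)" for i
    unfolding M_iff m_def ..
  have Mf': "i \<in> M f' \<longleftrightarrow> i \<in> {1..?n} \<and> \<phi> (at f i) < m - 1 \<and>
     (\<forall>j\<in>{1..?n}. \<phi> (at f j) = \<phi> (at f i) \<longrightarrow> j \<le> i) \<and>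
     (\<forall>j\<in>{1..?n}. \<phi> (at f j) = \<phi> (at f i) + 1 \<longrightarrow> i < j)" for i
  proof -
    have "i \<in> M f' \<longleftrightarrow> i \<in> {1..?n} \<and> at f' i < m - 1 \<and>
     (\<forall>j\<in>{1..?n}. at f' j = at f' i \<longrightarrow> j \<le> i) \<and>
     (\<forall>j\<in>{1..?n}. at f' j = at f' i + 1 \<longrightarrow> i < j)"
      unfolding M_iff mf' len ..
    also have "\<dots> \<longleftrightarrow> i \<in> {1..?n} \<and> \<phi> (at f i) < m - 1 \<and>
     (\<forall>j\<in>{1..?n}. \<phi> (at f j) = \<phi> (at f i) \<longrightarrow> j \<le> i) \<and>
     (\<forall>j\<in>{1..?n}. \<phi> (at f j) = \<phi> (at f i) + 1 \<longrightarrow> i < j)"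
      using atf' by (intro conj_cong refl ball_cong) auto
    finally show ?thesis .
  qed
  have Meq: "i \<in> M f' \<longleftrightarrow> i \<in> M f - {a}" for i
  proof (cases "i \<in> {1..?n}")
    case False
    have "i \<notin> M f'" using False Mf'[of i] by blast
    moreover have "i \<notin> M f" using False Mf[of i] by blast
    ultimately show ?thesis by blast
  next
    case i: True
    define w where "w = at f i"
    have w1: "w \<in> {1..m}" using packed_val[OF pf i] unfolding w_def m_def .
    consider "w < v" | "w = v" | "w = v + 1" | "v + 1 < w" by linarith
    then show ?thesis
    proof cases
      case 1
      have e1: "\<phi> y = \<phi> w \<longleftrightarrow> y = w" for y using 1 unfolding \<phi>_def by auto
      have e2: "\<phi> y = \<phi> w + 1 \<longleftrightarrow> y = w + 1 \<or> (w + 1 = v \<and> y = v + 1)" for y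
        using 1 unfolding \<phi>_def by auto
      have pw: "\<phi> w = w" using 1 unfolding \<phi>_def by simp
      have ia: "i \<noteq> a" using 1 w_def v_def by auto
      show ?thesis
      proof
        assume h: "i \<in> M f'"
        then have B: "\<forall>j\<in>{1..?n}. at f j = w \<longrightarrow> j \<le> i"
          and C: "\<forall>j\<in>{1..?n}. at f j = w + 1 \<longrightarrow> i < j"
          unfolding Mf' using e1 e2 w_def by auto
        have "w < m" using 1 a(2) by simp
        then show "i \<in> M f - {a}" using Mf[of i] i B C ia w_def by auto
      next
        assume h: "i \<in> M f - {a}"
        then have B: "\<forall>j\<in>{1..?n}. at f j = w \<longrightarrow> j \<le> i"
          and C: "\<forall>j\<in>{1..?n}. at f j = w + 1 \<longrightarrow> i < j"
          using Mf[of i] unfolding w_def by auto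
        have C': "\<forall>j\<in>{1..?n}. \<phi> (at f j) = \<phi> w + 1 \<longrightarrow> i < j"
        proof (intro ballI impI)
          fix j assume j: "j \<in> {1..?n}" "\<phi> (at f j) = \<phi> w + 1"
          then have "at f j = w + 1 \<or> (w + 1 = v \<and> at f j = v + 1)" using e2 by simp
          then show "i < j"
          proof
            assume "at f j = w + 1" then show ?thesis using C j by simp
          next
            assume h2: "w + 1 = v \<and> at f j = v + 1"
            then have "i < a" using C a(1) v_def by simp
            moreover have "a < j" using nxt j h2 by simp
            ultimately show ?thesis by simp
          qed
        qed
        have "\<phi> w < m - 1" using pw 1 a(2) by simp
        then show "i \<in> M f'" unfolding Mf' using i B C' e1 w_def by auto
      qed
    next
      case 2
      have lhs: "i \<notin> M f'"
      proof
        assume h: "i \<in> M f'"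
        have "v + 1 \<in> {1..maxw f}" using a(2) m_def by simp
        then obtain k where k: "k \<in> {1..?n}" "at f k = v + 1" using packed_ex[OF pf] by blast
        have "\<phi> (at f k) = \<phi> (at f i)" using k 2 w_def unfolding \<phi>_def by simp
        then have "k \<le> i" using h k unfolding Mf' by blast
        moreover have "a < k" using nxt k by simp
        moreover have "i \<le> a" using last i 2 w_def by simp
        ultimately show False by simp
      qed
      have rhs: "i \<notin> M f - {a}"
      proof
        assume h: "i \<in> M f - {a}"
        then have "\<forall>j\<in>{1..?n}. at f j = at f i \<longrightarrow> j \<le> i" using Mf[of i] by blast
        then have "a \<le> i" using a(1) 2 w_def v_def by auto
        moreover have "i \<le> a" using last i 2 w_def by simp
        ultimately show False using h by simp
      qed
      show ?thesis using lhs rhs by blast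
    next
      case 3
      have e1: "\<phi> y = \<phi> w \<longleftrightarrow> y = v \<or> y = v + 1" for y using 3 unfolding \<phi>_def by auto
      have e2: "\<phi> y = \<phi> w + 1 \<longleftrightarrow> y = w + 1" for y using 3 unfolding \<phi>_def by auto
      have pw: "\<phi> w = v" using 3 unfolding \<phi>_def by simp
      have ai: "a < i" using nxt i 3 w_def by simp
      have Bv: "\<forall>j\<in>{1..?n}. at f j = v \<longrightarrow> j \<le> i" using last ai by fastforce
      show ?thesis
      proof
        assume h: "i \<in> M f'"
        then have B: "\<forall>j\<in>{1..?n}. at f j = w \<longrightarrow> j \<le> i"
          and C: "\<forall>j\<in>{1..?n}. at f j = w + 1 \<longrightarrow> i < j"
          and mm: "\<phi> w < m - 1"
          unfolding Mf' using e1 e2 w_def 3 by auto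
        have "w < m" using mm pw 3 by simp
        then show "i \<in> M f - {a}" using Mf[of i] i B C ai w_def by auto
      next
        assume h: "i \<in> M f - {a}"
        then have B: "\<forall>j\<in>{1..?n}. at f j = w \<longrightarrow> j \<le> i"
          and C: "\<forall>j\<in>{1..?n}. at f j = w + 1 \<longrightarrow> i < j"
          and mm: "w < m"
          using Mf[of i] unfolding w_def by auto
        have "\<phi> w < m - 1" using pw mm 3 by simp
        then show "i \<in> M f'" unfolding Mf' using i B Bv C e1 e2 w_def 3 by auto
      qed
    next
      case 4
      have e1: "\<phi> y = \<phi> w \<longleftrightarrow> y = w" for y using 4 unfolding \<phi>_def by auto
      have e2: "\<phi> y = \<phi> w + 1 \<longleftrightarrow> y = w + 1" for y using 4 unfolding \<phi>_def by auto
      have pw: "\<phi> w = w - 1" using 4 unfolding \<phi>_def by simp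
      have ia: "i \<noteq> a" using 4 w_def v_def by auto
      have mm: "\<phi> w < m - 1 \<longleftrightarrow> w < m" using pw 4 by auto
      show ?thesis
        using Mf[of i] Mf'[of i] i ia e1 e2 mm w_def by auto
    qed
  qed
  show ?thesis unfolding f'eq using pf' len std Meq by blast
qed




lemma surj_aux:
  assumes sp: "\<sigma> \<in> perms n" and fin: "finite T"
  shows "T \<subseteq> M \<sigma> \<Longrightarrow> \<exists>f. packed f \<and> length f = n \<and> Std f = \<sigma> \<and> M f = M \<sigma> - T"
  using fin
proof (induction T rule: finite_induct)
  case empty
  have "packed \<sigma>" "length \<sigma> = n" using sp by (auto simp: perms_def)
  then show ?case using perm_Std[OF sp] by auto
next
  case (insert a T)
  then obtain f where f: "packed f" "length f = n" "Std f = \<sigma>" "M f = M \<sigma> - T" by auto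
  have "a \<in> M f" using insert f(4) by auto
  from merge[OF f(1) this] show ?case using f insert.hyps(2) by (intro exI[of _ "map (\<lambda>x. if at f a < x then x - 1 else x) f"]) auto
qed

lemma M_sub: "M f \<subseteq> {1..length f}" unfolding M_def by auto

theorem theorem23:
  shows "(\<forall>f g. packed f \<and> packed g \<and> length f = length g \<longrightarrow>
            (pw_le f g \<longleftrightarrow> Std f = Std g \<and> M f \<subseteq> M g))
       \<and> (\<forall>n\<ge>1. bij_betw Phi (packed_words n) (boolean_union n) \<and>
            (\<forall>f\<in>packed_words n. \<forall>g\<in>packed_words n.
               pw_le f g \<longleftrightarrow> bu_le (Phi f) (Phi g)))"
proof (intro conjI allI impI ballI)
  fix f g assume "packed f \<and> packed g \<and> length f = length g"
  then show "pw_le f g \<longleftrightarrow> Std f = Std g \<and> M f \<subseteq> M g" using partA by blast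
next
  fix n :: nat assume "1 \<le> n"
  show "bij_betw Phi (packed_words n) (boolean_union n)"
    unfolding bij_betw_def
  proof
    show "inj_on Phi (packed_words n)"
    proof
      fix f g assume f: "f \<in> packed_words n" and g: "g \<in> packed_words n" and e: "Phi f = Phi g"
      have pf: "packed f" "length f = n" and pg: "packed g" "length g = n"
        using f g by (auto simp: packed_words_def)
      have "Std f = Std g" "M f = M g" using e by (auto simp: Phi_def)
      then have "pw_le f g" "pw_le g f" using partA[OF pf(1) pg(1)] partA[OF pg(1) pf(1)] pf pg by auto
      then show "f = g" using pw_antisym pf pg by simp
    qed
    show "Phi ` packed_words n = boolean_union n"
    proof
      show "Phi ` packed_words n \<subseteq> boolean_union n"
      proof
        fix x assume "x \<in> Phi ` packed_words n"
        then obtain f where f: "packed f" "length f = n" "x = Phi f" by (auto simp: packed_words_def)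
        have sp: "Std f \<in> perms n" using Std_perm[of f] f by simp
        then have "packed (Std f)" "length (Std f) = n" by (auto simp: perms_def)
        then have "M f \<subseteq> M (Std f)" using partA[OF f(1)] pw_le_Std[of f] f by auto
        then show "x \<in> boolean_union n" using sp f by (simp add: boolean_union_def Phi_def)
      qed
      show "boolean_union n \<subseteq> Phi ` packed_words n"
      proof
        fix x assume "x \<in> boolean_union n"
        then obtain \<sigma> S where x: "x = (\<sigma>, S)" "\<sigma> \<in> perms n" "S \<subseteq> M \<sigma>"
          by (auto simp: boolean_union_def)
        have fin: "finite (M \<sigma> - S)" using M_sub[of \<sigma>] finite_subset by blast
        obtain f where f: "packed f" "length f = n" "Std f = \<sigma>" "M f = M \<sigma> - (M \<sigma> - S)"
          using surj_aux[OF x(2) fin] by blast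
        have "M f = S" using f(4) x(3) by auto
        then have "Phi f = x" using f x by (simp add: Phi_def)
        moreover have "f \<in> packed_words n" using f by (simp add: packed_words_def)
        ultimately show "x \<in> Phi ` packed_words n" by blast
      qed
    qed
  qed
next
  fix n :: nat and f g assume "1 \<le> n" "f \<in> packed_words n" "g \<in> packed_words n"
  then have "packed f" "packed g" "length f = length g" by (auto simp: packed_words_def)
  then show "pw_le f g \<longleftrightarrow> bu_le (Phi f) (Phi g)"
    using partA by (simp add: bu_le_def Phi_def)
qed


end
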